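(* (Regression adjustment identification.) Assume MMG and PAI with respect to $G$, and let $s_1,\dots,s_J$ be all connected subsets of $G$ containing vertex $1$. For every pattern $r$ with $r_1=0$ and $\psi(\bar r)=s_j$, $$\mathbb E[X_1 I(R=r)]=\mathbb E\big[m_{s_j}(X_{N_G(s_j)})I(R=r)\big],$$ and consequently $$\mathbb E[X_1]=\mathbb E[X_1 R_1]+\sum_{j=1}^J\mathbb E\big[m_{s_j}(X_{N_G(s_j)})\,I(\psi(\bar R)=s_j)\big].$$
   Context: $X=(X_1,\dots,X_d)$ with $\mathbb E|X_1|<\infty$, $R\in\{0,1\}^d$ with $R_j=1$ iff $X_j$ observed. Binary vectors are identified with index sets; $\bar r=\mathbf 1_d-r$. $G$ is an undirected graph on $\{1,\dots,d\}$; for an index set $U$, $N_G(U)$ is the set of vertices outside $U$ adjacent to $U$ and $\bar N_G(U)=U\cup N_G(U)$; "$R_U=1$" means $R_k=1$ for all $k\in U$. For $v\in\{0,1\}^d$ with $v_1=1$, $\psi(v)$ is the vertex set of the connected component containing vertex 1 in the subgraph of $G$ induced on $\{k:v_k=1\}$. $m_{s_j}(x_{N_G(s_j)})=\mathbb E[X_1\mid X_{N_G(s_j)}=x_{N_G(s_j)},R_{\bar N_G(s_j)}=1]$. MMG: for each pattern $r$ with $P(R=r)>0$ and connected components $s_1,\dots,s_K$ of the missing set $\{k:r_k=0\}$, $p(x_{\bar r}\mid x_r,R=r)=\prod_k p(x_{s_k}\mid x_{N_G(s_k)},R=r)$. PAI: $p(x_{s_k}\mid x_{N_G(s_k)},R=r)=p(x_{s_k}\mid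 x_{N_G(s_k)},R_{\bar N_G(s_k)}=1)$. Positivity assumed. *)

theory Defs
  imports "HOL-Probability.Probability"
begin

text \<open>Vertices are V = {1..d}; vertex 1 is the outcome. Patterns r are
  index sets of observed coordinates (r = {k. R_k = 1}), subsets of V.\<close>

definition ind_adj :: "(nat \<Rightarrow> nat \<Rightarrow> bool) \<Rightarrow> nat set \<Rightarrow> nat \<Rightarrow> nat \<Rightarrow> bool" where
  "ind_adj G S a b \<longleftrightarrow> a \<in> S \<and> b \<in> S \<and> G a b"

definition conn_set :: "(nat \<Rightarrow> nat \<Rightarrow> bool) \<Rightarrow> nat set \<Rightarrow> bool" where
  "conn_set G S \<longleftrightarrow> S \<noteq> {} \<and> (\<forall>u\<in>S. \<forall>v\<in>S. (ind_adj G S)\<^sup>*\<^sup>* u v)"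

definition comp_of :: "(nat \<Rightarrow> nat \<Rightarrow> bool) \<Rightarrow> nat set \<Rightarrow> nat \<Rightarrow> nat set" where
  "comp_of G S v = {w \<in> S. (ind_adj G S)\<^sup>*\<^sup>* v w}"

definition components :: "(nat \<Rightarrow> nat \<Rightarrow> bool) \<Rightarrow> nat set \<Rightarrow> nat set set" where
  "components G S = comp_of G S ` S"

definition nbr :: "nat set \<Rightarrow> (nat \<Rightarrow> nat \<Rightarrow> bool) \<Rightarrow> nat set \<Rightarrow> nat set" where
  "nbr V G U = {v \<in> V - U. \<exists>u\<in>U. G u v}"

text \<open>If 1 is not in v, psi is undefined in the paper; we return {},
  which is never a connected set, so the indicator I(psi(bar R) = s) is 0.\<close>
definition psi :: "(nat \<Rightarrow> nat \<Rightarrow> bool) \<Rightarrow> nat set \<Rightarrow> nat set" where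
  "psi G v = (if 1 \<in> v then comp_of G v 1 else {})"

definition dataM :: "nat set \<Rightarrow> real measure \<Rightarrow> (nat \<Rightarrow> real) measure" where
  "dataM V \<nu> = PiM V (\<lambda>_. \<nu>)"

text \<open>Joint density of (X_A, R in E) at x_A, obtained from the joint density f of
  (X, R) by integrating out X_{V-A} and summing over patterns in E.\<close>
definition marg :: "nat set \<Rightarrow> real measure \<Rightarrow> ((nat \<Rightarrow> real) \<Rightarrow> nat set \<Rightarrow> real)
    \<Rightarrow> nat set \<Rightarrow> nat set set \<Rightarrow> (nat \<Rightarrow> real) \<Rightarrow> real" where
  "marg V \<nu> f A E x =
     (\<integral>y. (\<Sum>r\<in>E. f (merge A (V - A) (x, y)) r) \<partial>PiM (V - A) (\<lambda>_. \<nu>))"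

definition cond_dens :: "nat set \<Rightarrow> real measure \<Rightarrow> ((nat \<Rightarrow> real) \<Rightarrow> nat set \<Rightarrow> real)
    \<Rightarrow> nat set \<Rightarrow> nat set \<Rightarrow> nat set set \<Rightarrow> (nat \<Rightarrow> real) \<Rightarrow> real" where
  "cond_dens V \<nu> f B A E x = marg V \<nu> f (A \<union> B) E x / marg V \<nu> f A E x"

text \<open>The event R_U = 1, as a set of patterns.\<close>
definition obs_all :: "nat set \<Rightarrow> nat set \<Rightarrow> nat set set" where
  "obs_all V U = {r. r \<subseteq> V \<and> U \<subseteq> r}"

text \<open>m_s(x_{N(s)}) = E[X_1 | X_{N(s)} = x_{N(s)}, R_{s \<union> N(s)} = 1].\<close>
definition mreg :: "nat set \<Rightarrow> real measure \<Rightarrow> ((nat \<Rightarrow> real) \<Rightarrow> nat set \<Rightarrow> real)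
    \<Rightarrow> (nat \<Rightarrow> nat \<Rightarrow> bool) \<Rightarrow> nat set \<Rightarrow> (nat \<Rightarrow> real) \<Rightarrow> real" where
  "mreg V \<nu> f G s x =
     (let N = nbr V G s; E = obs_all V (s \<union> N) in
      \<integral>t. t * cond_dens V \<nu> f {1} N E (x(1 := t)) \<partial>\<nu>)"

definition pos_pattern :: "nat set \<Rightarrow> real measure \<Rightarrow> ((nat \<Rightarrow> real) \<Rightarrow> nat set \<Rightarrow> real)
    \<Rightarrow> nat set \<Rightarrow> bool" where
  "pos_pattern V \<nu> f r \<longleftrightarrow> (\<integral>\<^sup>+x. ennreal (f x r) \<partial>dataM V \<nu>) > 0"

definition MMG :: "nat set \<Rightarrow> real measure \<Rightarrow> ((nat \<Rightarrow> real) \<Rightarrow> nat set \<Rightarrow> real)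
    \<Rightarrow> (nat \<Rightarrow> nat \<Rightarrow> bool) \<Rightarrow> bool" where
  "MMG V \<nu> f G \<longleftrightarrow> (\<forall>r. r \<subseteq> V \<and> pos_pattern V \<nu> f r \<longrightarrow>
     (AE x in dataM V \<nu>. cond_dens V \<nu> f (V - r) r {r} x =
        (\<Prod>s\<in>components G (V - r). cond_dens V \<nu> f s (nbr V G s) {r} x)))"

definition PAI :: "nat set \<Rightarrow> real measure \<Rightarrow> ((nat \<Rightarrow> real) \<Rightarrow> nat set \<Rightarrow> real)
    \<Rightarrow> (nat \<Rightarrow> nat \<Rightarrow> bool) \<Rightarrow> bool" where
  "PAI V \<nu> f G \<longleftrightarrow> (\<forall>r. r \<subseteq> V \<and> pos_pattern V \<nu> f r \<longrightarrow>
     (\<forall>s\<in>components G (V - r).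
       (AE x in dataM V \<nu>. cond_dens V \<nu> f s (nbr V G s) {r} x =
          cond_dens V \<nu> f s (nbr V G s) (obs_all V (s \<union> nbr V G s)) x)))"

end

theory Submission
  imports Defs
begin


definition mg :: "real measure \<Rightarrow> nat set \<Rightarrow> nat set \<Rightarrow> ((nat \<Rightarrow> real) \<Rightarrow> real) \<Rightarrow> (nat \<Rightarrow> real) \<Rightarrow> real" where
  "mg \<nu> W I h u = (\<integral>w. h (merge I (W - I) (u, w)) \<partial>PiM (W - I) (\<lambda>_. \<nu>))"

lemma mg_restrict: "mg \<nu> W I h (restrict x I) = mg \<nu> W I h x"
  unfolding mg_def by simp

lemma mg_cong_restrict: "restrict x I = restrict y I \<Longrightarrow> mg \<nu> W I h x = mg \<nu> W I h y"
  by (metis mg_restrict)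

locale ctx =
  fixes \<nu> :: "real measure"
  assumes sf: "sigma_finite_measure \<nu>" and nu_sets: "sets \<nu> = sets borel"
begin

lemma snd_borel[measurable]: "snd \<in> borel_measurable (M \<Otimes>\<^sub>M \<nu>)"
  using measurable_snd[of M \<nu>] by (simp add: measurable_cong_sets[OF refl nu_sets])


sublocale ps: product_sigma_finite "\<lambda>_. \<nu>"
  using sf by (simp add: product_sigma_finite_def)

abbreviation "PP I \<equiv> PiM I (\<lambda>_. \<nu>)"

lemma sfP: "finite I \<Longrightarrow> sigma_finite_measure (PP I)"
  by (rule ps.sigma_finite)

lemma Sec:
  fixes g :: "(nat \<Rightarrow> real) \<Rightarrow> real"
  assumes IJ: "I \<inter> J = {}" "finite I" "finite J"
    and g: "integrable (PP (I \<union> J)) g"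
  shows "(AE u in PP I. integrable (PP J) (\<lambda>y. g (merge I J (u,y))))"
    "integrable (PP I) (\<lambda>u. \<integral>y. g (merge I J (u,y)) \<partial>PP J)"
    "integral\<^sup>L (PP (I \<union> J)) g = (\<integral>u. (\<integral>y. g (merge I J (u,y)) \<partial>PP J) \<partial>PP I)"
proof -
  interpret I: finite_product_sigma_finite "\<lambda>_. \<nu>" I by standard fact
  interpret J: finite_product_sigma_finite "\<lambda>_. \<nu>" J by standard fact
  interpret P: pair_sigma_finite "PP I" "PP J" ..
  have int: "integrable (PP I \<Otimes>\<^sub>M PP J) (\<lambda>x. g (merge I J x))"
    by (rule integrable_distr[OF measurable_merge]) (simp add: ps.distr_merge[OF IJ] g)
  show "(AE u in PP I. integrable (PP J) (\<lambda>y. g (merge I J (u,y))))"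
    using P.AE_integrable_fst'[OF int] by simp
  show "integrable (PP I) (\<lambda>u. \<integral>y. g (merge I J (u,y)) \<partial>PP J)"
    using P.integrable_fst'[OF int] by simp
  show "integral\<^sup>L (PP (I \<union> J)) g = (\<integral>u. (\<integral>y. g (merge I J (u,y)) \<partial>PP J) \<partial>PP I)"
    by (rule ps.product_integral_fold[OF IJ g])
qed

lemma AEmerge:
  assumes IJ: "I \<inter> J = {}" "finite I" "finite J"
    and Q: "AE x in PP (I \<union> J). Q x"
  shows "AE u in PP I. AE v in PP J. Q (merge I J (u,v))"
proof -
  interpret I: finite_product_sigma_finite "\<lambda>_. \<nu>" I by standard fact
  interpret J: finite_product_sigma_finite "\<lambda>_. \<nu>" J by standard fact
  interpret P: pair_sigma_finite "PP I" "PP J" ..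
  have "AE x in PP I \<Otimes>\<^sub>M PP J. Q (merge I J x)"
  proof (rule AE_distrD[OF measurable_merge])
    have e: "distr (PP I \<Otimes>\<^sub>M PP J) (PP (I \<union> J)) (merge I J) = PP (I \<union> J)"
      by (rule ps.distr_merge[OF IJ])
    show "AE x in distr (PP I \<Otimes>\<^sub>M PP J) (PP (I \<union> J)) (merge I J). Q x"
      unfolding e by (rule Q)
  qed
  from P.AE_pair[OF this] show ?thesis by simp
qed

lemma mg_meas:
  assumes W: "finite W" and IW: "I \<subseteq> W"
    and h: "h \<in> borel_measurable (PP W)"
    and g: "g \<in> measurable M (PP I)"
  shows "(\<lambda>x. mg \<nu> W I h (g x)) \<in> borel_measurable M"
proof -
  interpret J: finite_product_sigma_finite "\<lambda>_. \<nu>" "W - I" by standard (use W in auto)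
  have W': "I \<union> (W - I) = W" using IW by auto
  have "(\<lambda>(x,w). h (merge I (W - I) (g x, w))) \<in> borel_measurable (M \<Otimes>\<^sub>M PP (W - I))"
  proof -
    have "(\<lambda>(x,w). merge I (W - I) (g x, w)) \<in> measurable (M \<Otimes>\<^sub>M PP (W - I)) (PP (I \<union> (W - I)))"
      using g by measurable
    then show ?thesis using h W' by (auto intro: measurable_compose_rev simp: case_prod_beta)
  qed
  then show ?thesis unfolding mg_def
    by (rule J.borel_measurable_lebesgue_integral)
qed

lemma mg_nonneg: "(\<And>x. h x \<ge> 0) \<Longrightarrow> mg \<nu> W I h u \<ge> 0"
  unfolding mg_def by (intro integral_nonneg_AE) auto

lemma G3:
  assumes W: "finite W" and KI: "K \<subseteq> I" and IW: "I \<subseteq> W"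
    and h: "h \<in> borel_measurable (PP W)" and a: "a \<in> borel_measurable (PP W)"
    and ra: "\<And>x. a x = a (restrict x I)"
    and int: "integrable (PP W) (\<lambda>x. a x * h x)"
  shows "AE u in PP K. integrable (PP (I - K)) (\<lambda>v. a (merge K (I - K) (u,v)) * mg \<nu> W I h (merge K (I - K) (u,v)))
           \<and> mg \<nu> I K (\<lambda>x. a x * mg \<nu> W I h x) u = mg \<nu> W K (\<lambda>x. a x * h x) u"
proof -
  have fK: "finite K" "finite (W - K)" "finite (I - K)" "finite (W - I)"
    using W KI IW by (meson finite_Diff finite_subset subset_trans)+
  have dK: "K \<inter> (W - K) = {}" "(I - K) \<inter> (W - I) = {}" by auto
  have WK: "K \<union> (W - K) = W" using KI IW by auto
  have int': "integrable (PP (K \<union> (W - K))) (\<lambda>x. a x * h x)" using int WK by simp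
  have J12: "(I - K) \<union> (W - I) = W - K" using KI IW by auto
  show ?thesis
    using Sec(1)[OF dK(1) fK(1,2) int']
  proof eventually_elim
    case (elim u)
    define F where "F y = a (merge K (W - K) (u, y)) * h (merge K (W - K) (u, y))" for y
    have intF: "integrable (PP ((I - K) \<union> (W - I))) F"
      using elim unfolding F_def J12 by simp
    have key: "F (merge (I - K) (W - I) (v, z)) =
        a (merge K (I - K) (u, v)) * h (merge I (W - I) (merge K (I - K) (u, v), z))" for v z
    proof -
      have m: "merge K (W - K) (u, merge (I - K) (W - I) (v, z)) = merge I (W - I) (merge K (I - K) (u, v), z)"
        using KI IW by (auto simp: merge_def fun_eq_iff)
      have "a (merge I (W - I) (merge K (I - K) (u, v), z)) = a (merge K (I - K) (u, v))"
        by (subst ra, subst (2) ra) simp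
      then show ?thesis unfolding F_def m by simp
    qed
    have inner: "(\<integral>z. F (merge (I - K) (W - I) (v, z)) \<partial>PP (W - I)) =
        a (merge K (I - K) (u, v)) * mg \<nu> W I h (merge K (I - K) (u, v))" for v
      unfolding key mg_def by simp
    have "integrable (PP (I - K)) (\<lambda>v. \<integral>z. F (merge (I - K) (W - I) (v, z)) \<partial>PP (W - I))"
      by (rule Sec(2)[OF dK(2) fK(3,4) intF])
    then have i1: "integrable (PP (I - K)) (\<lambda>v. a (merge K (I - K) (u,v)) * mg \<nu> W I h (merge K (I - K) (u,v)))"
      unfolding inner .
    have "integral\<^sup>L (PP ((I - K) \<union> (W - I))) F = (\<integral>v. (\<integral>z. F (merge (I - K) (W - I) (v, z)) \<partial>PP (W - I)) \<partial>PP (I - K))"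
      by (rule Sec(3)[OF dK(2) fK(3,4) intF])
    then have "mg \<nu> W K (\<lambda>x. a x * h x) u = mg \<nu> I K (\<lambda>x. a x * mg \<nu> W I h x) u"
      unfolding inner J12 by (simp add: mg_def F_def[abs_def])
    with i1 show ?case by simp
  qed
qed

lemma G1a:
  assumes W: "finite W" and IW: "I \<subseteq> W"
    and ra: "\<And>x. a x = a (restrict x I)"
    and int: "integrable (PP W) (\<lambda>x. a x * h x)"
  shows "integrable (PP I) (\<lambda>u. a u * mg \<nu> W I h u)"
    "(\<integral>x. a x * h x \<partial>PP W) = (\<integral>u. a u * mg \<nu> W I h u \<partial>PP I)"
proof -
  have f: "finite I" "finite (W - I)" using W IW finite_subset by auto
  have d: "I \<inter> (W - I) = {}" by auto
  have WI: "I \<union> (W - I) = W" using IW by auto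
  have int': "integrable (PP (I \<union> (W - I))) (\<lambda>x. a x * h x)" using int WI by simp
  have am: "a (merge I (W - I) (u, y)) = a u" for u y
    by (subst ra, subst (2) ra) simp
  have inn: "(\<integral>y. a (merge I (W - I) (u, y)) * h (merge I (W - I) (u, y)) \<partial>PP (W - I)) = a u * mg \<nu> W I h u" for u
    unfolding am mg_def by simp
  show "integrable (PP I) (\<lambda>u. a u * mg \<nu> W I h u)"
    using Sec(2)[OF d f int'] unfolding inn by simp
  show "(\<integral>x. a x * h x \<partial>PP W) = (\<integral>u. a u * mg \<nu> W I h u \<partial>PP I)"
    using Sec(3)[OF d f int'] unfolding inn WI by simp
qed

lemma G1b:
  assumes W: "finite W" and IW: "I \<subseteq> W"
    and h: "h \<in> borel_measurable (PP W)" and a: "a \<in> borel_measurable (PP W)"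
    and hn: "\<And>x. h x \<ge> 0" and hi: "integrable (PP W) h"
    and ra: "\<And>x. a x = a (restrict x I)"
    and int: "integrable (PP I) (\<lambda>u. a u * mg \<nu> W I h u)"
  shows "integrable (PP W) (\<lambda>x. a x * h x)"
proof -
  have f: "finite I" "finite (W - I)" using W IW finite_subset by auto
  have d: "I \<inter> (W - I) = {}" by auto
  have WI: "I \<union> (W - I) = W" using IW by auto
  have am: "a (merge I (W - I) (u, y)) = a u" for u y
    by (subst ra, subst (2) ra) simp
  have hi': "integrable (PP (I \<union> (W - I))) h" using hi WI by simp
  have m1: "(\<lambda>x. ennreal (norm (a x * h x))) \<in> borel_measurable (PP (I \<union> (W - I)))"
    using a h WI by simp
  have "(\<integral>\<^sup>+x. ennreal (norm (a x * h x)) \<partial>PP W) = (\<integral>\<^sup>+x. ennreal (norm (a x * h x)) \<partial>PP (I \<union> (W - I)))"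
    using WI by simp
  also have "\<dots> = (\<integral>\<^sup>+u. (\<integral>\<^sup>+y. ennreal (norm (a (merge I (W - I) (u, y)) * h (merge I (W - I) (u, y)))) \<partial>PP (W - I)) \<partial>PP I)"
    by (rule ps.product_nn_integral_fold[OF d f m1])
  also have "\<dots> = (\<integral>\<^sup>+u. ennreal (norm (a u * mg \<nu> W I h u)) \<partial>PP I)"
  proof (rule nn_integral_cong_AE)
    show "AE u in PP I. (\<integral>\<^sup>+y. ennreal (norm (a (merge I (W - I) (u, y)) * h (merge I (W - I) (u, y)))) \<partial>PP (W - I))
        = ennreal (norm (a u * mg \<nu> W I h u))"
      using Sec(1)[OF d f hi']
    proof eventually_elim
      case (elim u)
      have "(\<integral>\<^sup>+y. ennreal (norm (a (merge I (W - I) (u, y)) * h (merge I (W - I) (u, y)))) \<partial>PP (W - I))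
          = (\<integral>\<^sup>+y. ennreal \<bar>a u\<bar> * ennreal (h (merge I (W - I) (u, y))) \<partial>PP (W - I))"
        unfolding am using hn by (simp add: abs_mult ennreal_mult)
      also have "\<dots> = ennreal \<bar>a u\<bar> * (\<integral>\<^sup>+y. ennreal (h (merge I (W - I) (u, y))) \<partial>PP (W - I))"
        by (rule nn_integral_cmult) (use elim in auto)
      also have "(\<integral>\<^sup>+y. ennreal (h (merge I (W - I) (u, y))) \<partial>PP (W - I)) = ennreal (mg \<nu> W I h u)"
        unfolding mg_def by (rule nn_integral_eq_integral) (use elim hn in auto)
      finally show ?case
        using mg_nonneg[of h W I u] hn by (simp add: abs_mult ennreal_mult)
    qed
  qed
  also have "\<dots> < \<infinity>" using int unfolding integrable_iff_bounded by simp
  finally show ?thesis unfolding integrable_iff_bounded using a h by simp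
qed

lemma AE_const_nz: "AE x in M. C \<Longrightarrow> emeasure M (space M) \<noteq> 0 \<Longrightarrow> C"
  by (metis ae_filter_eq_bot_iff eventually_False)

lemma PP_nz:
  assumes "finite J" "emeasure \<nu> (space \<nu>) \<noteq> 0"
  shows "emeasure (PP J) (space (PP J)) \<noteq> 0"
proof -
  have "emeasure (PP J) (space (PP J)) = emeasure (PP J) (PiE J (\<lambda>_. space \<nu>))"
    by (simp add: space_PiM)
  also have "\<dots> = (\<Prod>i\<in>J. emeasure \<nu> (space \<nu>))"
    by (rule ps.emeasure_PiM) (use assms in auto)
  finally show ?thesis using assms by simp
qed

lemma AErestrict:
  assumes W: "finite W" and IW: "I \<subseteq> W" and nz: "emeasure \<nu> (space \<nu>) \<noteq> 0"
    and Q: "AE x in PP W. Q (restrict x I)"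
  shows "AE u in PP I. Q u"
proof -
  have f: "finite I" "finite (W - I)" using W IW finite_subset by auto
  have d: "I \<inter> (W - I) = {}" by auto
  have WI: "I \<union> (W - I) = W" using IW by auto
  have "AE u in PP I. AE v in PP (W - I). Q (restrict (merge I (W - I) (u,v)) I)"
    by (rule AEmerge[OF d f, where Q="\<lambda>x. Q (restrict x I)"]) (unfold WI, rule Q)
  then show ?thesis
  proof (rule AE_mp[OF _ AE_I2[OF impI]])
    fix u assume u: "u \<in> space (PP I)" and "AE v in PP (W - I). Q (restrict (merge I (W - I) (u,v)) I)"
    then have "AE v in PP (W - I). Q u" using u by (simp add: space_PiM)
    then show "Q u" by (rule AE_const_nz) (rule PP_nz[OF f(2) nz])
  qed
qed

lemma mreg_meas:
  assumes W: "finite W" and iN: "insert i N \<subseteq> W" "i \<notin> N"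
    and k: "k \<in> borel_measurable (PP W)" and g: "g \<in> measurable M (PP N)"
  shows "(\<lambda>x. \<integral>t. t * (mg \<nu> W (insert i N) k ((g x)(i:=t)) / mg \<nu> W N k ((g x)(i:=t))) \<partial>\<nu>) \<in> borel_measurable M"
proof -
  interpret sigma_finite_measure \<nu> by (rule sf)
  have g2: "(\<lambda>(x,t). (g x)(i:=t)) \<in> measurable (M \<Otimes>\<^sub>M \<nu>) (PP (insert i N))"
    using g by measurable
  have m1: "(\<lambda>p. mg \<nu> W (insert i N) k ((g (fst p))(i := snd p))) \<in> borel_measurable (M \<Otimes>\<^sub>M \<nu>)"
    using mg_meas[OF W iN(1) k g2] by (simp add: case_prod_beta)
  have e: "mg \<nu> W N k ((g x)(i:=t)) = mg \<nu> W N k (g x)" for x t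
    by (rule mg_cong_restrict) (use iN in \<open>auto simp: fun_eq_iff restrict_def\<close>)
  have m2: "(\<lambda>p. mg \<nu> W N k (g (fst p))) \<in> borel_measurable (M \<Otimes>\<^sub>M \<nu>)"
    by (rule mg_meas[OF W _ k]) (use iN g in auto)
  have "(\<lambda>(x,t). t * (mg \<nu> W (insert i N) k ((g x)(i:=t)) / mg \<nu> W N k ((g x)(i:=t)))) \<in> borel_measurable (M \<Otimes>\<^sub>M \<nu>)"
  proof -
    note [measurable] = m1 m2
    have "(\<lambda>p. snd p * mg \<nu> W (insert i N) k ((g (fst p))(i := snd p)) / mg \<nu> W N k (g (fst p))) \<in> borel_measurable (M \<Otimes>\<^sub>M \<nu>)"
      by measurable
    then show ?thesis unfolding e by (simp add: case_prod_beta)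
  qed
  then show ?thesis by (rule sigma_finite_measure.borel_measurable_lebesgue_integral[OF sf])
qed

lemma comp_borel: "i \<in> I \<Longrightarrow> (\<lambda>x. x i) \<in> borel_measurable (PP I)"
  using measurable_component_singleton[of i I "\<lambda>_. \<nu>"] by (simp add: measurable_cong_sets[OF refl nu_sets])

lemma id_borel: "(\<lambda>t. t) \<in> borel_measurable \<nu>"
  using measurable_ident_sets[OF nu_sets] by simp

lemma merge_meas: "u \<in> space (PP N) \<Longrightarrow> (\<lambda>v. merge N s (u, v)) \<in> measurable (PP s) (PP (N \<union> s))"
  using measurable_compose[OF measurable_Pair1' measurable_merge] by blast

lemma core:
  fixes V N s :: "nat set" and h k :: "(nat \<Rightarrow> real) \<Rightarrow> real"
  assumes V: "finite V" and Ns: "N \<inter> s = {}" "N \<union> s \<subseteq> V" and s1: "1 \<in> s"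
    and hm: "h \<in> borel_measurable (PP V)" and km: "k \<in> borel_measurable (PP V)"
    and hn: "\<And>x. h x \<ge> 0" and kn: "\<And>x. k x \<ge> 0"
    and hi: "integrable (PP V) h" and ki: "integrable (PP V) k"
    and hi1: "integrable (PP V) (\<lambda>x. x 1 * h x)" and ki1: "integrable (PP V) (\<lambda>x. x 1 * k x)"
    and nz: "emeasure \<nu> (space \<nu>) \<noteq> 0"
    and pai: "AE x in PP V. mg \<nu> V (N \<union> s) h x / mg \<nu> V N h x = mg \<nu> V (N \<union> s) k x / mg \<nu> V N k x"
  defines "m \<equiv> \<lambda>x. \<integral>t. t * (mg \<nu> V (N \<union> {1}) k (x(1:=t)) / mg \<nu> V N k (x(1:=t))) \<partial>\<nu>"
  shows "integrable (PP V) (\<lambda>x. m x * h x)" "(\<integral>x. x 1 * h x \<partial>PP V) = (\<integral>x. m x * h x \<partial>PP V)"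
proof -
  define A where "A = N \<union> s"
  have N1: "1 \<notin> N" using Ns s1 by auto
  have AV: "A \<subseteq> V" "N \<subseteq> A" "N \<subseteq> V" "1 \<in> A" "1 \<in> V" "insert 1 N \<subseteq> V" using Ns s1 unfolding A_def by auto
  have fin: "finite N" "finite s" "finite A" using V Ns finite_subset unfolding A_def by auto
  have AN: "A - N = s" using Ns unfolding A_def by auto
  have N1N: "(N \<union> {1}) - N = {1}" using N1 by auto
  have N1i: "N \<union> {1} = insert 1 N" by auto
  have S1: "integrable (PP A) (\<lambda>u. u 1 * mg \<nu> V A h u)"
      "(\<integral>x. x 1 * h x \<partial>PP V) = (\<integral>u. u 1 * mg \<nu> V A h u \<partial>PP A)"
    using G1a[OF V AV(1) _ hi1] AV(4) by auto
  define \<Phi> where "\<Phi> u = (\<integral>v. merge N s (u,v) 1 * mg \<nu> V A h (merge N s (u,v)) \<partial>PP s)" for u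
  have S1': "integrable (PP (N \<union> s)) (\<lambda>u. u 1 * mg \<nu> V A h u)" using S1 unfolding A_def by simp
  have S2: "integrable (PP N) \<Phi>" "(\<integral>u. u 1 * mg \<nu> V A h u \<partial>PP A) = (\<integral>u. \<Phi> u \<partial>PP N)"
    using Sec(2,3)[OF Ns(1) fin(1,2) S1'] unfolding \<Phi>_def A_def by auto
  have mr: "m x = m (restrict x N)" for x
  proof -
    have e1: "mg \<nu> V (N \<union> {1}) k (x(1:=t)) = mg \<nu> V (N \<union> {1}) k ((restrict x N)(1:=t))" for t
      by (rule mg_cong_restrict) (auto simp: fun_eq_iff restrict_def)
    have e2: "mg \<nu> V N k (x(1:=t)) = mg \<nu> V N k ((restrict x N)(1:=t))" for t
      by (rule mg_cong_restrict) (auto simp: fun_eq_iff restrict_def)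
    show ?thesis unfolding m_def e1 e2 ..
  qed
  have mmN: "m \<in> borel_measurable (PP N)"
    using mreg_meas[OF V AV(6) N1 km measurable_ident_sets[OF refl]] unfolding m_def N1i by simp
  have mmV: "m \<in> borel_measurable (PP V)"
  proof -
    have "(\<lambda>x. m (restrict x N)) \<in> borel_measurable (PP V)"
      using mreg_meas[OF V AV(6) N1 km measurable_restrict_subset[OF AV(3)]] unfolding m_def N1i by simp
    then show ?thesis using mr by simp
  qed
  have S4: "AE u in PP N. \<Phi> u = m u * mg \<nu> V N h u"
  proof -
    have a: "AE u in PP N. integrable (PP (A - N)) (\<lambda>v. 1 * mg \<nu> V A h (merge N (A - N) (u,v)))
           \<and> mg \<nu> A N (\<lambda>x. 1 * mg \<nu> V A h x) u = mg \<nu> V N (\<lambda>x. 1 * h x) u"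
      by (rule G3[OF V AV(2,1) hm]) (use hi in auto)
    have c1: "AE u in PP N. mg \<nu> A N (\<lambda>x. x 1 * mg \<nu> V A k x) u = mg \<nu> V N (\<lambda>x. x 1 * k x) u"
      using G3[OF V AV(2,1) km comp_borel[OF AV(5)] _ ki1] AV(4) by auto
    have c2: "AE u in PP N. mg \<nu> (N \<union> {1}) N (\<lambda>x. x 1 * mg \<nu> V (N \<union> {1}) k x) u = mg \<nu> V N (\<lambda>x. x 1 * k x) u"
      using G3[OF V _ _ km comp_borel[OF AV(5)] _ ki1, of N "N \<union> {1}"] AV by auto
    have b: "AE u in PP N. AE v in PP s. mg \<nu> V A h (merge N s (u,v)) / mg \<nu> V N h (merge N s (u,v))
          = mg \<nu> V A k (merge N s (u,v)) / mg \<nu> V N k (merge N s (u,v))"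
    proof -
      have "AE x in PP V. (\<lambda>w. mg \<nu> V A h w / mg \<nu> V N h w = mg \<nu> V A k w / mg \<nu> V N k w) (restrict x A)"
        using pai
      proof eventually_elim
        case (elim x)
        have r: "restrict (restrict x A) N = restrict x N" using AV(2) by (auto simp: fun_eq_iff restrict_def)
        show ?case using elim unfolding A_def[symmetric]
          by (simp add: mg_restrict mg_cong_restrict[OF r])
      qed
      then have "AE w in PP A. mg \<nu> V A h w / mg \<nu> V N h w = mg \<nu> V A k w / mg \<nu> V N k w"
        by (rule AErestrict[OF V AV(1) nz])
      then have "AE w in PP (N \<union> s). mg \<nu> V A h w / mg \<nu> V N h w = mg \<nu> V A k w / mg \<nu> V N k w"
        unfolding A_def .
      then show ?thesis by (rule AEmerge[OF Ns(1) fin(1,2)])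
    qed
    show ?thesis
      using a b c1 c2 AE_space
    proof eventually_elim
      case (elim u)
      have u: "u \<in> space (PP N)" using elim by simp
      have rN: "mg \<nu> V N g (merge N s (u,v)) = mg \<nu> V N g u" for g v
        by (rule mg_cong_restrict) (use Ns in simp)
      have rN1: "mg \<nu> V N g (u(1:=t)) = mg \<nu> V N g u" for g t
        by (rule mg_cong_restrict) (use N1 in \<open>auto simp: fun_eq_iff restrict_def\<close>)
      define MhN where "MhN = mg \<nu> V N h u"
      define MkN where "MkN = mg \<nu> V N k u"
      define \<Psi> where "\<Psi> = (\<integral>t. t * mg \<nu> V (N \<union> {1}) k (u(1:=t)) \<partial>\<nu>)"
      have Psi1: "(\<integral>v. merge N s (u,v) 1 * mg \<nu> V A k (merge N s (u,v)) \<partial>PP s) = \<Psi>"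
      proof -
        have "(\<integral>v. merge N s (u,v) 1 * mg \<nu> V A k (merge N s (u,v)) \<partial>PP s) = mg \<nu> V N (\<lambda>x. x 1 * k x) u"
          using elim(3) unfolding mg_def AN by simp
        also have "\<dots> = mg \<nu> (N \<union> {1}) N (\<lambda>x. x 1 * mg \<nu> V (N \<union> {1}) k x) u"
          using elim(4) by simp
        also have "\<dots> = (\<integral>e. (\<lambda>t. t * mg \<nu> V (N \<union> {1}) k (u(1:=t))) (e 1) \<partial>PP ({1}::nat set))"
        proof -
          have eq: "merge N {1} (u,e) 1 * mg \<nu> V (N \<union> {1}) k (merge N {1} (u,e)) = e 1 * mg \<nu> V (N \<union> {1}) k (u(1:=e 1))" for e
          proof -
            have "merge N {1} (u,e) 1 = e 1" using N1 by (simp add: merge_def)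
            moreover have "mg \<nu> V (N \<union> {1}) k (merge N {1} (u,e)) = mg \<nu> V (N \<union> {1}) k (u(1:=e 1))"
              by (rule mg_cong_restrict) (use N1 in \<open>auto simp: merge_def restrict_def fun_eq_iff\<close>)
            ultimately show ?thesis by simp
          qed
          show ?thesis unfolding mg_def[of _ "N \<union> {1}" N] N1N eq by (rule refl)
        qed
        also have "\<dots> = \<Psi>"
          unfolding \<Psi>_def
        proof (rule ps.product_integral_singleton)
          have "(\<lambda>t. u(1:=t)) \<in> measurable \<nu> (PP (insert 1 N))"
            using measurable_component_update[OF u N1] .
          then have "(\<lambda>t. mg \<nu> V (insert 1 N) k (u(1:=t))) \<in> borel_measurable \<nu>"
            by (rule mg_meas[OF V AV(6) km])
          then show "(\<lambda>t. t * mg \<nu> V (N \<union> {1}) k (u(1:=t))) \<in> borel_measurable \<nu>"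
            using id_borel unfolding N1i by simp
        qed
        finally show ?thesis .
      qed
      have mu: "m u = \<Psi> / MkN"
        unfolding m_def \<Psi>_def MkN_def rN1 by simp
      show ?case
      proof (cases "MhN = 0")
        case True
        have int0: "integrable (PP s) (\<lambda>v. mg \<nu> V A h (merge N s (u,v)))"
          using elim(1) unfolding AN by simp
        have "(\<integral>v. mg \<nu> V A h (merge N s (u,v)) \<partial>PP s) = 0"
          using elim(1) True unfolding MhN_def mg_def[of _ A N] AN by simp
        then have "AE v in PP s. mg \<nu> V A h (merge N s (u,v)) = 0"
          using integral_nonneg_eq_0_iff_AE[OF int0] mg_nonneg hn by simp
        then have "\<Phi> u = 0" unfolding \<Phi>_def by (intro integral_eq_zero_AE) auto
        then show ?thesis using True unfolding MhN_def by simp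
      next
        case False
        have "\<Phi> u = (\<integral>v. (MhN / MkN) * (merge N s (u,v) 1 * mg \<nu> V A k (merge N s (u,v))) \<partial>PP s)"
          unfolding \<Phi>_def
        proof (rule integral_cong_AE)
          have mm: "(\<lambda>v. merge N s (u, v)) \<in> measurable (PP s) (PP A)" using merge_meas[OF u] unfolding A_def .
          have c: "(\<lambda>v. merge N s (u, v) 1) \<in> borel_measurable (PP s)"
            using measurable_compose[OF mm comp_borel[OF AV(4)]] .
          have h1: "(\<lambda>v. mg \<nu> V A h (merge N s (u, v))) \<in> borel_measurable (PP s)"
            by (rule mg_meas[OF V AV(1) hm mm])
          have k1: "(\<lambda>v. mg \<nu> V A k (merge N s (u, v))) \<in> borel_measurable (PP s)"
            by (rule mg_meas[OF V AV(1) km mm])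
          show "(\<lambda>v. merge N s (u, v) 1 * mg \<nu> V A h (merge N s (u, v))) \<in> borel_measurable (PP s)"
            using c h1 by simp
          show "(\<lambda>v. MhN / MkN * (merge N s (u, v) 1 * mg \<nu> V A k (merge N s (u, v)))) \<in> borel_measurable (PP s)"
            using c k1 by simp
          show "AE v in PP s. merge N s (u, v) 1 * mg \<nu> V A h (merge N s (u, v)) =
              MhN / MkN * (merge N s (u, v) 1 * mg \<nu> V A k (merge N s (u, v)))"
            using elim(2)
          proof eventually_elim
            case (elim v)
            then have "mg \<nu> V A h (merge N s (u, v)) / MhN = mg \<nu> V A k (merge N s (u, v)) / MkN"
              unfolding MhN_def MkN_def rN .
            then have "mg \<nu> V A h (merge N s (u, v)) = MhN * (mg \<nu> V A k (merge N s (u, v)) / MkN)"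
              using False by (simp add: field_simps)
            then show ?case by simp
          qed
        qed
        also have "\<dots> = (MhN / MkN) * \<Psi>" using Psi1 by simp
        also have "\<dots> = m u * MhN" using mu by simp
        finally show ?thesis unfolding MhN_def .
      qed
    qed
  qed
  have mMm: "(\<lambda>u. m u * mg \<nu> V N h u) \<in> borel_measurable (PP N)"
    using mmN mg_meas[OF V AV(3) hm measurable_ident_sets[OF refl]] by simp
  have intN: "integrable (PP N) (\<lambda>u. m u * mg \<nu> V N h u)"
    using integrable_cong_AE[OF borel_measurable_integrable[OF S2(1)] mMm S4] S2(1) by simp
  have eqN: "(\<integral>u. \<Phi> u \<partial>PP N) = (\<integral>u. m u * mg \<nu> V N h u \<partial>PP N)"
    by (rule integral_cong_AE[OF borel_measurable_integrable[OF S2(1)] mMm S4])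
  show intV: "integrable (PP V) (\<lambda>x. m x * h x)"
    by (rule G1b[OF V AV(3) hm mmV hn hi mr intN])
  show "(\<integral>x. x 1 * h x \<partial>PP V) = (\<integral>x. m x * h x \<partial>PP V)"
    using S1(2) S2(2) eqN G1a(2)[OF V AV(3) mr intV] by simp
qed

lemma m_measV:
  assumes V: "finite V" and N: "N \<subseteq> V" "1 \<in> V" "1 \<notin> N" and km: "k \<in> borel_measurable (PP V)"
  shows "(\<lambda>x. \<integral>t. t * (mg \<nu> V (N \<union> {1}) k (x(1:=t)) / mg \<nu> V N k (x(1:=t))) \<partial>\<nu>) \<in> borel_measurable (PP V)"
proof -
  define m where "m \<equiv> \<lambda>x. \<integral>t. t * (mg \<nu> V (N \<union> {1}) k (x(1:=t)) / mg \<nu> V N k (x(1:=t))) \<partial>\<nu>"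
  have N1i: "N \<union> {1} = insert 1 N" by auto
  have ins: "insert 1 N \<subseteq> V" using N by auto
  have mr: "m x = m (restrict x N)" for x
  proof -
    have e1: "mg \<nu> V (N \<union> {1}) k (x(1:=t)) = mg \<nu> V (N \<union> {1}) k ((restrict x N)(1:=t))" for t
      by (rule mg_cong_restrict) (auto simp: fun_eq_iff restrict_def)
    have e2: "mg \<nu> V N k (x(1:=t)) = mg \<nu> V N k ((restrict x N)(1:=t))" for t
      by (rule mg_cong_restrict) (auto simp: fun_eq_iff restrict_def)
    show ?thesis unfolding m_def e1 e2 ..
  qed
  have "(\<lambda>x. m (restrict x N)) \<in> borel_measurable (PP V)"
    using mreg_meas[OF V ins N(3) km measurable_restrict_subset[OF N(1)]] unfolding m_def N1i by simp
  then show ?thesis using mr unfolding m_def[symmetric] by simp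
qed

end

lemma rtranclp_sym_rev:
  assumes "\<And>a b. R a b \<Longrightarrow> R b a" and "R\<^sup>*\<^sup>* x y" shows "R\<^sup>*\<^sup>* y x"
  using assms(2)
proof (induction rule: rtranclp_induct)
  case base then show ?case by simp
next
  case (step y z)
  then show ?case using assms(1) by (meson converse_rtranclp_into_rtranclp)
qed

lemma comp_reach:
  assumes "(ind_adj G X)\<^sup>*\<^sup>* a b" "(ind_adj G X)\<^sup>*\<^sup>* c a" "a \<in> X"
  shows "(ind_adj G (comp_of G X c))\<^sup>*\<^sup>* a b"
  using assms(1)
proof (induction rule: rtranclp_induct)
  case base then show ?case by simp
next
  case (step y z)
  have cy: "(ind_adj G X)\<^sup>*\<^sup>* c y" using assms(2) step(1) by (rule rtranclp_trans)
  have cz: "(ind_adj G X)\<^sup>*\<^sup>* c z" using cy step(2) by (rule rtranclp.rtrancl_into_rtrancl)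
  have "ind_adj G (comp_of G X c) y z"
    using step(2) cy cz unfolding ind_adj_def comp_of_def by auto
  with step(3) show ?case by (rule rtranclp.rtrancl_into_rtrancl)
qed

lemma comp_conn:
  assumes sym: "\<And>u v. G u v \<Longrightarrow> G v u" and c: "c \<in> X"
  shows "conn_set G (comp_of G X c)" "c \<in> comp_of G X c" "comp_of G X c \<subseteq> X"
proof -
  show cc: "c \<in> comp_of G X c" using c unfolding comp_of_def by simp
  show "comp_of G X c \<subseteq> X" unfolding comp_of_def by auto
  have symC: "ind_adj G C a b \<Longrightarrow> ind_adj G C b a" for C a b using sym unfolding ind_adj_def by auto
  have r1: "(ind_adj G (comp_of G X c))\<^sup>*\<^sup>* c u" if "u \<in> comp_of G X c" for u
    using comp_reach[of G X c u c] that c unfolding comp_of_def by auto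
  show "conn_set G (comp_of G X c)"
    unfolding conn_set_def
  proof (intro conjI ballI)
    show "comp_of G X c \<noteq> {}" using cc by auto
    fix u v assume "u \<in> comp_of G X c" "v \<in> comp_of G X c"
    then have "(ind_adj G (comp_of G X c))\<^sup>*\<^sup>* c u" "(ind_adj G (comp_of G X c))\<^sup>*\<^sup>* c v" using r1 by auto
    moreover have "(ind_adj G (comp_of G X c))\<^sup>*\<^sup>* u c"
      by (rule rtranclp_sym_rev[of "ind_adj G (comp_of G X c)"]) (use symC calculation in auto)
    ultimately show "(ind_adj G (comp_of G X c))\<^sup>*\<^sup>* u v" by (meson rtranclp_trans)
  qed
qed



theorem mainTheorem7:
  fixes d :: nat and \<nu> :: "real measure"
    and f :: "(nat \<Rightarrow> real) \<Rightarrow> nat set \<Rightarrow> real"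
    and G :: "nat \<Rightarrow> nat \<Rightarrow> bool"
  defines "V \<equiv> {1..d}"
  assumes d_pos: "1 \<le> d"
    and nu_sets: "sets \<nu> = sets borel"
    and nu_sfin: "sigma_finite_measure \<nu>"
    and G_in: "\<And>u v. G u v \<Longrightarrow> u \<in> V \<and> v \<in> V"
    and G_sym: "\<And>u v. G u v \<Longrightarrow> G v u"
    and G_irrefl: "\<And>u. \<not> G u u"
    and f_meas: "\<And>r. (\<lambda>x. f x r) \<in> borel_measurable (dataM V \<nu>)"
    and f_nonneg: "\<And>x r. f x r \<ge> 0"
    and f_zero: "\<And>x r. \<not> r \<subseteq> V \<Longrightarrow> f x r = 0"
    and f_prob: "(\<integral>x. (\<Sum>r\<in>Pow V. f x r) \<partial>dataM V \<nu>) = 1"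
    and f_int: "integrable (dataM V \<nu>) (\<lambda>x. (\<Sum>r\<in>Pow V. f x r))"
    and positivity: "\<And>x. x \<in> space (dataM V \<nu>) \<Longrightarrow> f x V > 0"
    and X1_int: "integrable (dataM V \<nu>) (\<lambda>x. \<bar>x 1\<bar> * (\<Sum>r\<in>Pow V. f x r))"
    and mmg: "MMG V \<nu> f G"
    and pai: "PAI V \<nu> f G"
  shows "(\<forall>s r. conn_set G s \<and> s \<subseteq> V \<and> 1 \<in> s \<and> r \<subseteq> V \<and> 1 \<notin> r \<and> psi G (V - r) = s \<longrightarrow>
            (\<integral>x. x 1 * f x r \<partial>dataM V \<nu>) = (\<integral>x. mreg V \<nu> f G s x * f x r \<partial>dataM V \<nu>))
       \<and> (\<integral>x. x 1 * (\<Sum>r\<in>Pow V. f x r) \<partial>dataM V \<nu>) =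
           (\<integral>x. x 1 * (\<Sum>r\<in>{r\<in>Pow V. 1 \<in> r}. f x r) \<partial>dataM V \<nu>)
           + (\<Sum>s\<in>{s. s \<subseteq> V \<and> 1 \<in> s \<and> conn_set G s}.
                (\<integral>x. mreg V \<nu> f G s x * (\<Sum>r\<in>{r\<in>Pow V. psi G (V - r) = s}. f x r) \<partial>dataM V \<nu>))"
proof -
  interpret ctx \<nu> using nu_sfin nu_sets by (simp add: ctx_def)
  have D: "dataM V \<nu> = PP V" by (simp add: dataM_def)
  have finV: "finite V" and V1: "1 \<in> V" using d_pos unfolding V_def by auto
  have marg_mg: "\<And>A E x. marg V \<nu> f A E x = mg \<nu> V A (\<lambda>x. \<Sum>r\<in>E. f x r) x"
    by (simp add: marg_def mg_def)
  have mreg_eq: "\<And>s x. mreg V \<nu> f G s x = (\<integral>t. t * (mg \<nu> V (nbr V G s \<union> {1}) (\<lambda>x. \<Sum>r\<in>obs_all V (s \<union> nbr V G s). f x r) (x(1:=t))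
        / mg \<nu> V (nbr V G s) (\<lambda>x. \<Sum>r\<in>obs_all V (s \<union> nbr V G s). f x r) (x(1:=t))) \<partial>\<nu>)"
    by (simp add: mreg_def cond_dens_def marg_mg Let_def)
  define F where "F x = (\<Sum>r\<in>Pow V. f x r)" for x
  have fmeas: "\<And>r. (\<lambda>x. f x r) \<in> borel_measurable (PP V)" using f_meas D by simp
  have Fm: "F \<in> borel_measurable (PP V)" unfolding F_def using fmeas by simp
  have Fn: "F x \<ge> 0" for x unfolding F_def using f_nonneg by (simp add: sum_nonneg)
  have Fi: "integrable (PP V) F" using f_int D unfolding F_def by simp
  have X1i: "integrable (PP V) (\<lambda>x. \<bar>x 1\<bar> * F x)" using X1_int D unfolding F_def by simp
  have fle: "f x r \<le> F x" for x r
  proof (cases "r \<subseteq> V")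
    case True then show ?thesis unfolding F_def
      by (intro member_le_sum) (use f_nonneg finV in auto)
  next
    case False then show ?thesis using f_zero Fn by simp
  qed
  have sle: "(\<Sum>r\<in>E. f x r) \<le> F x" if "E \<subseteq> Pow V" for x E
    unfolding F_def by (rule sum_mono2) (use that finV f_nonneg in auto)
  have x1m: "(\<lambda>x. x 1) \<in> borel_measurable (PP V)" by (rule comp_borel[OF V1])
  have intr: "integrable (PP V) (\<lambda>x. f x r)" for r
    by (rule Bochner_Integration.integrable_bound[OF Fi fmeas]) (use fle f_nonneg Fn in auto)
  have intr1: "integrable (PP V) (\<lambda>x. x 1 * f x r)" for r
    by (rule Bochner_Integration.integrable_bound[OF X1i]) (use fle f_nonneg Fn x1m fmeas in \<open>auto simp: abs_mult intro!: mult_left_mono\<close>)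
  have intE: "integrable (PP V) (\<lambda>x. \<Sum>r\<in>E. f x r)" "integrable (PP V) (\<lambda>x. x 1 * (\<Sum>r\<in>E. f x r))" if "E \<subseteq> Pow V" for E
  proof -
    have fE: "finite E" using that finV finite_subset by (metis finite_Pow_iff)
    show "integrable (PP V) (\<lambda>x. \<Sum>r\<in>E. f x r)" using intr fE by simp
    show "integrable (PP V) (\<lambda>x. x 1 * (\<Sum>r\<in>E. f x r))" using intr1 fE by (simp add: sum_distrib_left)
  qed
  have nz: "emeasure \<nu> (space \<nu>) \<noteq> 0"
  proof
    assume z: "emeasure \<nu> (space \<nu>) = 0"
    have "emeasure (PP V) (space (PP V)) = emeasure (PP V) (PiE V (\<lambda>_. space \<nu>))"
      by (simp add: space_PiM)
    also have "\<dots> = (\<Prod>i\<in>V. emeasure \<nu> (space \<nu>))"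
      by (rule ps.emeasure_PiM) (use finV in auto)
    also have "\<dots> = 0" using z finV V1 by (auto simp: card_gt_0_iff)
    finally have "ae_filter (PP V) = bot" using ae_filter_eq_bot_iff[of "PP V"] by simp
    then have "AE x in PP V. F x = 0" by (metis eventually_bot)
    then have "(\<integral>x. F x \<partial>PP V) = 0" by (rule integral_eq_zero_AE)
    then show False using f_prob D unfolding F_def by simp
  qed
  have part1: "integrable (PP V) (\<lambda>x. mreg V \<nu> f G (psi G (V - r)) x * f x r)
      \<and> (\<integral>x. x 1 * f x r \<partial>PP V) = (\<integral>x. mreg V \<nu> f G (psi G (V - r)) x * f x r \<partial>PP V)"
    if r: "r \<subseteq> V" "1 \<notin> r" for r
  proof -
    have X1: "1 \<in> V - r" using r V1 by auto
    define s where "s = psi G (V - r)"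
    have s_eq: "s = comp_of G (V - r) 1" unfolding s_def psi_def using X1 by simp
    have s1: "1 \<in> s" and sX: "s \<subseteq> V - r" using comp_conn[where G=G and X="V - r" and c=1, OF G_sym X1] unfolding s_eq by auto
    define N where "N = nbr V G s"
    define k where "k x = (\<Sum>r\<in>obs_all V (s \<union> N). f x r)" for x
    have Ns: "N \<inter> s = {}" "N \<union> s \<subseteq> V" using sX unfolding N_def nbr_def by auto
    have N1: "1 \<notin> N" using Ns s1 by auto
    have obsP: "obs_all V (s \<union> N) \<subseteq> Pow V" unfolding obs_all_def by auto
    have km: "k \<in> borel_measurable (PP V)" unfolding k_def using fmeas by simp
    have kn: "k x \<ge> 0" for x unfolding k_def using f_nonneg by (simp add: sum_nonneg)
    have ki: "integrable (PP V) k" "integrable (PP V) (\<lambda>x. x 1 * k x)"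
      unfolding k_def using intE[OF obsP] by auto
    have mreg_m: "mreg V \<nu> f G s x = (\<integral>t. t * (mg \<nu> V (N \<union> {1}) k (x(1:=t)) / mg \<nu> V N k (x(1:=t))) \<partial>\<nu>)" for x
      unfolding mreg_eq N_def k_def[abs_def] ..
    have mm: "(\<lambda>x. mreg V \<nu> f G s x) \<in> borel_measurable (PP V)"
      unfolding mreg_m using m_measV[OF finV _ V1 N1 km] Ns by auto
    show ?thesis
    proof (cases "pos_pattern V \<nu> f r")
      case True
      have comp: "s \<in> components G (V - r)" unfolding components_def s_eq using X1 by simp
      have pai': "AE x in dataM V \<nu>. cond_dens V \<nu> f s N {r} x = cond_dens V \<nu> f s N (obs_all V (s \<union> N)) x"
        using pai r True comp unfolding PAI_def N_def by blast
      have pai'': "AE x in PP V. mg \<nu> V (N \<union> s) (\<lambda>x. f x r) x / mg \<nu> V N (\<lambda>x. f x r) x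
          = mg \<nu> V (N \<union> s) k x / mg \<nu> V N k x"
        using pai' unfolding D cond_dens_def marg_mg k_def[abs_def] by simp
      note C = core[OF finV Ns s1 fmeas km f_nonneg kn intr ki(1) intr1 ki(2) nz pai'']
      show ?thesis using C unfolding mreg_m[symmetric] s_def by simp
    next
      case False
      have "(\<integral>\<^sup>+x. ennreal (f x r) \<partial>PP V) = 0" using False unfolding pos_pattern_def D by (simp add: zero_less_iff_neq_zero)
      then have "AE x in PP V. ennreal (f x r) = 0"
        using nn_integral_0_iff_AE[of "\<lambda>x. ennreal (f x r)" "PP V"] fmeas by simp
      then have ae0: "AE x in PP V. f x r = 0"
        by eventually_elim (use f_nonneg in \<open>auto intro: antisym\<close>)
      have e1: "(\<integral>x. x 1 * f x r \<partial>PP V) = 0" by (rule integral_eq_zero_AE) (use ae0 in auto)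
      have e2: "(\<integral>x. mreg V \<nu> f G s x * f x r \<partial>PP V) = 0" by (rule integral_eq_zero_AE) (use ae0 in auto)
      have i2: "integrable (PP V) (\<lambda>x. mreg V \<nu> f G s x * f x r)"
        by (rule integrable_cong_AE_imp[of _ "\<lambda>_. 0"]) (use ae0 mm fmeas in auto)
      show ?thesis using e1 e2 i2 unfolding s_def by simp
    qed
  qed
  show ?thesis
  proof (intro conjI allI impI)
    fix s r assume H: "conn_set G s \<and> s \<subseteq> V \<and> 1 \<in> s \<and> r \<subseteq> V \<and> 1 \<notin> r \<and> psi G (V - r) = s"
    then show "(\<integral>x. x 1 * f x r \<partial>dataM V \<nu>) = (\<integral>x. mreg V \<nu> f G s x * f x r \<partial>dataM V \<nu>)"
      using part1[of r] D by auto
  next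
    define R1 where "R1 = {r\<in>Pow V. 1 \<in> r}"
    define R0 where "R0 = {r\<in>Pow V. 1 \<notin> r}"
    define S where "S = {s. s \<subseteq> V \<and> 1 \<in> s \<and> conn_set G s}"
    have fin: "finite R1" "finite R0" "finite S" "finite (Pow V)" using finV unfolding R1_def R0_def S_def by auto
    have PR: "Pow V = R1 \<union> R0" "R1 \<inter> R0 = {}" unfolding R1_def R0_def by auto
    have R1P: "R1 \<subseteq> Pow V" "R0 \<subseteq> Pow V" unfolding R1_def R0_def by auto
    have eq1: "x 1 * F x = x 1 * (\<Sum>r\<in>R1. f x r) + (\<Sum>r\<in>R0. x 1 * f x r)" for x
    proof -
      have "F x = (\<Sum>r\<in>R1. f x r) + (\<Sum>r\<in>R0. f x r)"
        unfolding F_def PR(1) by (rule sum.union_disjoint) (use fin PR in auto)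
      then show ?thesis by (simp add: sum_distrib_left distrib_left)
    qed
    have "(\<integral>x. x 1 * F x \<partial>PP V) = (\<integral>x. x 1 * (\<Sum>r\<in>R1. f x r) \<partial>PP V) + (\<integral>x. (\<Sum>r\<in>R0. x 1 * f x r) \<partial>PP V)"
      unfolding eq1 by (rule Bochner_Integration.integral_add) (use intE[OF R1P(1)] intr1 in auto)
    also have "(\<integral>x. (\<Sum>r\<in>R0. x 1 * f x r) \<partial>PP V) = (\<Sum>r\<in>R0. \<integral>x. x 1 * f x r \<partial>PP V)"
      by (rule Bochner_Integration.integral_sum) (use intr1 in auto)
    also have "\<dots> = (\<Sum>r\<in>R0. \<integral>x. mreg V \<nu> f G (psi G (V - r)) x * f x r \<partial>PP V)"
      by (rule sum.cong) (use part1 in \<open>auto simp: R0_def\<close>)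
    also have "\<dots> = (\<Sum>s\<in>S. \<Sum>r\<in>{r. r \<in> R0 \<and> psi G (V - r) = s}. \<integral>x. mreg V \<nu> f G (psi G (V - r)) x * f x r \<partial>PP V)"
    proof (rule sum.group[symmetric, OF fin(2,3)])
      show "(\<lambda>r. psi G (V - r)) ` R0 \<subseteq> S"
      proof
        fix s assume "s \<in> (\<lambda>r. psi G (V - r)) ` R0"
        then obtain r where r: "r \<in> R0" "s = psi G (V - r)" by auto
        have X1: "1 \<in> V - r" using r V1 unfolding R0_def by auto
        then have "s = comp_of G (V - r) 1" using r unfolding psi_def by simp
        then show "s \<in> S" using comp_conn[where G=G and X="V - r" and c=1, OF G_sym X1] unfolding S_def by auto
      qed
    qed
    also have "\<dots> = (\<Sum>s\<in>S. \<Sum>r\<in>{r\<in>Pow V. psi G (V - r) = s}. \<integral>x. mreg V \<nu> f G s x * f x r \<partial>PP V)"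
    proof (rule sum.cong[OF refl])
      fix s assume s: "s \<in> S"
      have "{r. r \<in> R0 \<and> psi G (V - r) = s} = {r\<in>Pow V. psi G (V - r) = s}"
      proof (intro set_eqI iffI)
        fix r assume "r \<in> {r\<in>Pow V. psi G (V - r) = s}"
        moreover have "1 \<notin> r" if "psi G (V - r) = s"
        proof
          assume "1 \<in> r" then have "psi G (V - r) = {}" unfolding psi_def by simp
          with that s show False unfolding S_def by auto
        qed
        ultimately show "r \<in> {r. r \<in> R0 \<and> psi G (V - r) = s}" unfolding R0_def by auto
      qed (auto simp: R0_def)
      then show "(\<Sum>r\<in>{r. r \<in> R0 \<and> psi G (V - r) = s}. \<integral>x. mreg V \<nu> f G (psi G (V - r)) x * f x r \<partial>PP V)
          = (\<Sum>r\<in>{r\<in>Pow V. psi G (V - r) = s}. \<integral>x. mreg V \<nu> f G s x * f x r \<partial>PP V)"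
        by (intro sum.cong) auto
    qed
    also have "\<dots> = (\<Sum>s\<in>S. \<integral>x. mreg V \<nu> f G s x * (\<Sum>r\<in>{r\<in>Pow V. psi G (V - r) = s}. f x r) \<partial>PP V)"
    proof (rule sum.cong[OF refl])
      fix s assume s: "s \<in> S"
      have "(\<integral>x. (\<Sum>r\<in>{r\<in>Pow V. psi G (V - r) = s}. mreg V \<nu> f G s x * f x r) \<partial>PP V)
          = (\<Sum>r\<in>{r\<in>Pow V. psi G (V - r) = s}. \<integral>x. mreg V \<nu> f G s x * f x r \<partial>PP V)"
      proof (rule Bochner_Integration.integral_sum)
        fix r assume r: "r \<in> {r\<in>Pow V. psi G (V - r) = s}"
        have "1 \<notin> r"
        proof
          assume "1 \<in> r" then have "psi G (V - r) = {}" unfolding psi_def by simp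
          with r s show False unfolding S_def by auto
        qed
        then show "integrable (PP V) (\<lambda>x. mreg V \<nu> f G s x * f x r)" using part1[of r] r by auto
      qed
      then show "(\<Sum>r\<in>{r\<in>Pow V. psi G (V - r) = s}. \<integral>x. mreg V \<nu> f G s x * f x r \<partial>PP V)
          = (\<integral>x. mreg V \<nu> f G s x * (\<Sum>r\<in>{r\<in>Pow V. psi G (V - r) = s}. f x r) \<partial>PP V)"
        by (simp add: sum_distrib_left)
    qed
    finally show "(\<integral>x. x 1 * (\<Sum>r\<in>Pow V. f x r) \<partial>dataM V \<nu>) =
           (\<integral>x. x 1 * (\<Sum>r\<in>{r\<in>Pow V. 1 \<in> r}. f x r) \<partial>dataM V \<nu>)
           + (\<Sum>s\<in>{s. s \<subseteq> V \<and> 1 \<in> s \<and> conn_set G s}.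
                (\<integral>x. mreg V \<nu> f G s x * (\<Sum>r\<in>{r\<in>Pow V. psi G (V - r) = s}. f x r) \<partial>dataM V \<nu>))"
      unfolding D F_def R1_def S_def .
  qed
qed

end
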